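(* If $\lambda>\operatorname{cf}(\lambda)=\omega$, then $\mathfrak{r}_\lambda\le\mathfrak{i}_\lambda$.
   Context: For $\mathcal{A}\subseteq[\lambda]^\lambda$, $\operatorname{comb}(\mathcal{A})$ is the set of all sets $\bigcap\Gamma-\bigcup\Delta$ with $\Gamma,\Delta\in[\mathcal{A}]^{<\omega}$, $\Gamma\cap\Delta=\varnothing$. $\mathcal{A}$ is independent iff $\operatorname{comb}(\mathcal{A})\subseteq[\lambda]^\lambda$; $\mathfrak{i}_\lambda$ is the minimal size of a maximal independent family in $[\lambda]^\lambda$. A set $S$ splits $B\in[\lambda]^\lambda$ if $|B\cap S|=|B-S|=\lambda$. A family $\mathcal{A}\subseteq[\lambda]^\lambda$ is unsplittable if no single $S\in[\lambda]^\lambda$ splits every member of $\mathcal{A}$; the reaping number $\mathfrak{r}_\lambda$ is the minimal size of an unsplittable family in $[\lambda]^\lambda$. *)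

theory Defs
  imports "HOL-Library.Equipollence" "HOL-Library.Countable_Set"
begin

text \<open>The cardinal lambda is represented by a set L of cardinality lambda.
  full_subsets L is [lambda]^lambda: subsets of L of the same cardinality as L.\<close>

definition full_subsets :: "'a set \<Rightarrow> 'a set set" where
  "full_subsets L = {B. B \<subseteq> L \<and> B \<approx> L}"

definition comb :: "'a set \<Rightarrow> 'a set set \<Rightarrow> 'a set set" where
  "comb L \<A> = {(L \<inter> \<Inter>\<Gamma>) - \<Union>\<Delta> | \<Gamma> \<Delta>.
      \<Gamma> \<subseteq> \<A> \<and> \<Delta> \<subseteq> \<A> \<and> finite \<Gamma> \<and> finite \<Delta> \<and> \<Gamma> \<inter> \<Delta> = {}}"

definition independent :: "'a set \<Rightarrow> 'a set set \<Rightarrow> bool" where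
  "independent L \<A> \<longleftrightarrow> \<A> \<subseteq> full_subsets L \<and> comb L \<A> \<subseteq> full_subsets L"

definition maximal_independent :: "'a set \<Rightarrow> 'a set set \<Rightarrow> bool" where
  "maximal_independent L \<A> \<longleftrightarrow> independent L \<A> \<and>
     (\<forall>\<B>. independent L \<B> \<and> \<A> \<subseteq> \<B> \<longrightarrow> \<B> = \<A>)"

definition splits :: "'a set \<Rightarrow> 'a set \<Rightarrow> 'a set \<Rightarrow> bool" where
  "splits L S B \<longleftrightarrow> (B \<inter> S) \<approx> L \<and> (B - S) \<approx> L"

definition unsplittable :: "'a set \<Rightarrow> 'a set set \<Rightarrow> bool" where
  "unsplittable L \<A> \<longleftrightarrow> \<A> \<subseteq> full_subsets L \<and>
     \<not> (\<exists>S \<in> full_subsets L. \<forall>B \<in> \<A>. splits L S B)"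

text \<open>cf(|L|) = omega for infinite L: L is a countable union of sets of size < |L|.\<close>

definition cf_omega :: "'a set \<Rightarrow> bool" where
  "cf_omega L \<longleftrightarrow> infinite L \<and>
     (\<exists>A :: nat \<Rightarrow> 'a set. (\<forall>n. A n \<subseteq> L \<and> A n \<prec> L) \<and> (\<Union>n. A n) = L)"

end

theory Submission
  imports Defs
begin

unbundle cardinal_syntax

lemma lepoll_card_of: "A \<lesssim> B \<longleftrightarrow> |A| \<le>o |B|"
  by (simp add: lepoll_def card_of_ordLeq[symmetric])

lemma times_self_eqpoll: "infinite A \<Longrightarrow> A \<times> A \<approx> A"
  by (simp add: eqpoll_iff_card_of_ordIso card_of_Times_same_infinite)

lemma lists_n_lepoll:
  assumes "infinite A"
  shows "{xs. set xs \<subseteq> A \<and> length xs = n} \<lesssim> A"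
proof (induction n)
  case 0
  have "A \<noteq> {}" using assms by auto
  then obtain a where "a \<in> A" by auto
  have "{xs. set xs \<subseteq> A \<and> length xs = 0} = {[]}" by auto
  moreover have "{[]} \<lesssim> A" using \<open>a \<in> A\<close> unfolding lepoll_def
    by (rule_tac x="\<lambda>_. a" in exI) auto
  ultimately show ?case by simp
next
  case (Suc n)
  have "{xs. set xs \<subseteq> A \<and> length xs = Suc n} \<subseteq>
      (\<lambda>(x,xs). x # xs) ` (A \<times> {xs. set xs \<subseteq> A \<and> length xs = n})"
  proof
    fix ys assume "ys \<in> {xs. set xs \<subseteq> A \<and> length xs = Suc n}"
    then obtain x xs where "ys = x # xs" "x \<in> A" "set xs \<subseteq> A" "length xs = n"
      by (cases ys) auto
    then show "ys \<in> (\<lambda>(x,xs). x # xs) ` (A \<times> {xs. set xs \<subseteq> A \<and> length xs = n})"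
      by (auto intro!: image_eqI[where x="(x,xs)"])
  qed
  then have "{xs. set xs \<subseteq> A \<and> length xs = Suc n} \<lesssim> A \<times> {xs. set xs \<subseteq> A \<and> length xs = n}"
    by (rule subset_image_lepoll)
  also have "\<dots> \<lesssim> A \<times> A" using Suc by (simp add: times_lepoll_mono)
  also have "\<dots> \<lesssim> A" using times_self_eqpoll[OF assms] by (simp add: eqpoll_imp_lepoll)
  finally show ?case .
qed

lemma lists_lepoll_inf:
  assumes "infinite A"
  shows "lists A \<lesssim> A"
proof -
  have eq: "lists A = (\<Union>n\<in>UNIV. {xs. set xs \<subseteq> A \<and> length xs = n})" by auto
  have "|\<Union>n\<in>(UNIV::nat set). {xs. set xs \<subseteq> A \<and> length xs = n}| \<le>o |A|"
    apply (rule card_of_UNION_ordLeq_infinite)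
    using assms infinite_le_lepoll[of A] lists_n_lepoll[OF assms]
    by (auto simp: lepoll_card_of)
  then show ?thesis using eq by (simp add: lepoll_card_of)
qed

lemma Fpow_lepoll_inf:
  assumes "infinite A"
  shows "Fpow A \<lesssim> A"
proof -
  have "Fpow A \<subseteq> set ` lists A"
  proof
    fix X assume "X \<in> Fpow A"
    then have "finite X" "X \<subseteq> A" by (auto simp: Fpow_def)
    then obtain xs where "set xs = X" using finite_list by blast
    then show "X \<in> set ` lists A" using \<open>X \<subseteq> A\<close> by auto
  qed
  then have "Fpow A \<lesssim> lists A" by (rule subset_image_lepoll)
  also have "\<dots> \<lesssim> A" by (rule lists_lepoll_inf[OF assms])
  finally show ?thesis .
qed

lemma comb_lepoll:
  assumes "infinite \<I>"
  shows "comb L \<I> \<lesssim> \<I>"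
proof -
  have "comb L \<I> \<subseteq> (\<lambda>(\<Gamma>,\<Delta>). (L \<inter> \<Inter>\<Gamma>) - \<Union>\<Delta>) ` (Fpow \<I> \<times> Fpow \<I>)"
  proof
    fix C assume "C \<in> comb L \<I>"
    then obtain \<Gamma> \<Delta> where "C = (L \<inter> \<Inter>\<Gamma>) - \<Union>\<Delta>" "\<Gamma> \<subseteq> \<I>" "\<Delta> \<subseteq> \<I>" "finite \<Gamma>" "finite \<Delta>"
      unfolding comb_def by blast
    then show "C \<in> (\<lambda>(\<Gamma>,\<Delta>). (L \<inter> \<Inter>\<Gamma>) - \<Union>\<Delta>) ` (Fpow \<I> \<times> Fpow \<I>)"
      by (intro image_eqI[where x="(\<Gamma>,\<Delta>)"]) (auto simp: Fpow_def)
  qed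
  then have "comb L \<I> \<lesssim> Fpow \<I> \<times> Fpow \<I>" by (rule subset_image_lepoll)
  also have "\<dots> \<lesssim> \<I> \<times> \<I>" using Fpow_lepoll_inf[OF assms] by (simp add: times_lepoll_mono)
  also have "\<dots> \<lesssim> \<I>" using times_self_eqpoll[OF assms] by (simp add: eqpoll_imp_lepoll)
  finally show ?thesis .
qed

lemma full_sup:
  assumes "X \<subseteq> C" "C \<subseteq> L" "X \<approx> L"
  shows "C \<approx> L"
proof (rule lepoll_antisym)
  show "C \<lesssim> L" using assms by (simp add: subset_imp_lepoll)
  have "L \<lesssim> X" using assms(3) by (simp add: eqpoll_imp_lepoll eqpoll_sym)
  also have "X \<lesssim> C" using assms by (simp add: subset_imp_lepoll)
  finally show "L \<lesssim> C" .
qed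

lemma split_inf:
  assumes "infinite X"
  shows "\<exists>Y \<subseteq> X. Y \<approx> X \<and> X - Y \<approx> X"
proof -
  obtain a b where ab: "a \<in> X" "b \<in> X" "a \<noteq> b"
    using assms by (metis finite.simps insertCI infinite_imp_nonempty finite_insert finite_subset subsetI)
  obtain g where g: "bij_betw g (X \<times> X) X"
    using times_self_eqpoll[OF assms] by (auto simp: eqpoll_def)
  define Y where "Y = g ` (X \<times> {a})"
  have inj: "inj_on g (X \<times> X)" using g by (simp add: bij_betw_def)
  have Yeq: "Y \<approx> X"
  proof -
    have "Y \<approx> X \<times> {a}" unfolding Y_def
      by (rule inj_on_image_eqpoll_self) (rule inj_on_subset[OF inj], use ab in auto)
    also have "X \<times> {a} \<approx> X" by (rule eqpoll_trans[OF times_commute_eqpoll times_singleton_eqpoll])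
    finally show ?thesis .
  qed
  have YX: "Y \<subseteq> X" unfolding Y_def using g ab by (auto simp: bij_betw_def)
  have "g ` (X \<times> {b}) \<subseteq> X - Y"
  proof
    fix z assume "z \<in> g ` (X \<times> {b})"
    then obtain x where x: "x \<in> X" "z = g (x,b)" by auto
    have "z \<in> X" using g x ab by (auto simp: bij_betw_def)
    moreover have "z \<notin> Y"
    proof
      assume "z \<in> Y"
      then obtain y where "y \<in> X" "z = g (y,a)" unfolding Y_def by auto
      then have "(x,b) = (y,a)" using inj x ab unfolding inj_on_def by blast
      then show False using ab by auto
    qed
    ultimately show "z \<in> X - Y" by auto
  qed
  moreover have "g ` (X \<times> {b}) \<approx> X"
  proof -
    have "g ` (X \<times> {b}) \<approx> X \<times> {b}"
      by (rule inj_on_image_eqpoll_self) (rule inj_on_subset[OF inj], use ab in auto)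
    also have "X \<times> {b} \<approx> X" by (rule eqpoll_trans[OF times_commute_eqpoll times_singleton_eqpoll])
    finally show ?thesis .
  qed
  ultimately have "X - Y \<approx> X" using full_sup[of "g ` (X \<times> {b})" "X - Y" X] by auto
  then show ?thesis using YX Yeq by blast
qed


lemma comb_sub: "C \<in> comb L \<A> \<Longrightarrow> C \<subseteq> L"
  unfolding comb_def by auto

lemma comb_full:
  assumes "independent L \<I>" "C \<in> comb L \<I>"
  shows "C \<approx> L"
  using assms unfolding independent_def full_subsets_def by auto

lemma comb_unsplittable:
  assumes inf: "infinite L" and max: "maximal_independent L \<I>"
  shows "unsplittable L (comb L \<I>)"
proof -
  have ind: "independent L \<I>" using max by (simp add: maximal_independent_def)
  have sub: "comb L \<I> \<subseteq> full_subsets L" using ind by (simp add: independent_def)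
  have False if "S \<in> full_subsets L" "\<forall>B\<in>comb L \<I>. splits L S B" for S
  proof (cases "S \<in> \<I>")
    case True
    have "L \<inter> S \<in> comb L \<I>" unfolding comb_def
      by (rule CollectI, rule exI[where x="{S}"], rule exI[where x="{}"]) (use True in auto)
    then have "splits L S (L \<inter> S)" using that by auto
    then have "L \<inter> S - S \<approx> L" by (simp add: splits_def)
    moreover have "L \<inter> S - S = {}" by auto
    ultimately have "({}::'a set) \<approx> L" by metis
    then show ?thesis using inf using eqpoll_sym by fastforce
  next
    case False
    have "\<not> independent L (insert S \<I>)"
      using max False unfolding maximal_independent_def by blast
    moreover have "insert S \<I> \<subseteq> full_subsets L" using that(1) ind by (simp add: independent_def)
    ultimately obtain C where C: "C \<in> comb L (insert S \<I>)" "C \<notin> full_subsets L"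
      unfolding independent_def by blast
    then obtain \<Gamma> \<Delta> where GD: "C = (L \<inter> \<Inter>\<Gamma>) - \<Union>\<Delta>" "\<Gamma> \<subseteq> insert S \<I>" "\<Delta> \<subseteq> insert S \<I>"
      "finite \<Gamma>" "finite \<Delta>" "\<Gamma> \<inter> \<Delta> = {}" unfolding comb_def by blast
    define B where "B = (L \<inter> \<Inter>(\<Gamma> - {S})) - \<Union>(\<Delta> - {S})"
    have B: "B \<in> comb L \<I>" unfolding comb_def B_def
      by (rule CollectI, rule exI[where x="\<Gamma> - {S}"], rule exI[where x="\<Delta> - {S}"]) (use GD in auto)
    have CnL: "\<not> C \<approx> L" using C comb_sub unfolding full_subsets_def by blast
    have "splits L S B" using that B by auto
    moreover
    {
      assume "S \<in> \<Gamma>"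
      then have "C = B \<inter> S" using GD unfolding B_def by auto
    }
    moreover
    {
      assume "S \<in> \<Delta>"
      then have "C = B - S" using GD unfolding B_def by auto
    }
    moreover
    {
      assume "S \<notin> \<Gamma>" "S \<notin> \<Delta>"
      then have "C = B" using GD unfolding B_def by auto
      then have False using CnL comb_full[OF ind B] by simp
    }
    ultimately show False using CnL unfolding splits_def by blast
  qed
  then show ?thesis using sub unfolding unsplittable_def by blast
qed


lemma finite_ind_not_max:
  assumes inf: "infinite L" and ind: "independent L \<I>" and fin: "finite \<I>"
  shows "\<exists>S. S \<notin> \<I> \<and> independent L (insert S \<I>)"
proof -
  define atom where "atom \<Gamma> = (L \<inter> \<Inter>\<Gamma>) - \<Union>(\<I> - \<Gamma>)" for \<Gamma>
  have atom_comb: "atom \<Gamma> \<in> comb L \<I>" if "\<Gamma> \<subseteq> \<I>" for \<Gamma>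
    unfolding comb_def atom_def
    by (rule CollectI, rule exI[where x="\<Gamma>"], rule exI[where x="\<I> - \<Gamma>"])
      (use that fin finite_subset in auto)
  have atom_full: "atom \<Gamma> \<approx> L" if "\<Gamma> \<subseteq> \<I>" for \<Gamma>
    using comb_full[OF ind atom_comb[OF that]] .
  have "\<forall>\<Gamma>\<in>Pow \<I>. \<exists>Y. Y \<subseteq> atom \<Gamma> \<and> Y \<approx> atom \<Gamma> \<and> atom \<Gamma> - Y \<approx> atom \<Gamma>"
  proof
    fix \<Gamma> assume "\<Gamma> \<in> Pow \<I>"
    then have "infinite (atom \<Gamma>)" using atom_full inf eqpoll_finite_iff by blast
    then show "\<exists>Y. Y \<subseteq> atom \<Gamma> \<and> Y \<approx> atom \<Gamma> \<and> atom \<Gamma> - Y \<approx> atom \<Gamma>"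
      using split_inf by blast
  qed
  then obtain h where h: "\<forall>\<Gamma>\<in>Pow \<I>. h \<Gamma> \<subseteq> atom \<Gamma> \<and> h \<Gamma> \<approx> atom \<Gamma> \<and> atom \<Gamma> - h \<Gamma> \<approx> atom \<Gamma>"
    by (auto dest!: bchoice)
  have hsub: "h \<Gamma> \<subseteq> atom \<Gamma>" if "\<Gamma> \<subseteq> \<I>" for \<Gamma> using h that by auto
  have hL: "h \<Gamma> \<approx> L" if "\<Gamma> \<subseteq> \<I>" for \<Gamma>
    using h that atom_full eqpoll_trans by blast
  have hc: "atom \<Gamma> - h \<Gamma> \<approx> L" if "\<Gamma> \<subseteq> \<I>" for \<Gamma>
    using h that atom_full eqpoll_trans by blast
  have disj: "atom \<Gamma> \<inter> atom \<Gamma>' = {}" if a: "\<Gamma> \<subseteq> \<I>" "\<Gamma>' \<subseteq> \<I>" "\<Gamma> \<noteq> \<Gamma>'" for \<Gamma> \<Gamma>'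
  proof -
    obtain x where "x \<in> \<Gamma> - \<Gamma>' \<or> x \<in> \<Gamma>' - \<Gamma>" using a by blast
    then show ?thesis using a unfolding atom_def by blast
  qed
  define S where "S = (\<Union>\<Gamma>\<in>Pow \<I>. h \<Gamma>)"
  have atomL: "atom \<Gamma> \<subseteq> L" for \<Gamma> unfolding atom_def by auto
  have SL: "S \<subseteq> L" unfolding S_def using hsub atomL by blast
  have key1: "h \<Gamma> \<subseteq> atom \<Gamma> \<inter> S" if "\<Gamma> \<subseteq> \<I>" for \<Gamma>
    using hsub[OF that] that unfolding S_def by blast
  have key2: "atom \<Gamma> - S = atom \<Gamma> - h \<Gamma>" if "\<Gamma> \<subseteq> \<I>" for \<Gamma>
  proof
    show "atom \<Gamma> - S \<subseteq> atom \<Gamma> - h \<Gamma>" using that unfolding S_def by blast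
    show "atom \<Gamma> - h \<Gamma> \<subseteq> atom \<Gamma> - S"
    proof
      fix x assume x: "x \<in> atom \<Gamma> - h \<Gamma>"
      have "x \<notin> h \<Gamma>'" if "\<Gamma>' \<subseteq> \<I>" for \<Gamma>'
      proof (cases "\<Gamma>' = \<Gamma>")
        case True then show ?thesis using x by simp
      next
        case False
        then show ?thesis using disj[OF \<open>\<Gamma> \<subseteq> \<I>\<close> that] hsub[OF that] x by blast
      qed
      then show "x \<in> atom \<Gamma> - S" using x unfolding S_def by blast
    qed
  qed
  have sub_atom: "atom \<Gamma>0 \<subseteq> (L \<inter> \<Inter>\<Gamma>0) - \<Union>\<Delta>0" if "\<Delta>0 \<subseteq> \<I>" "\<Gamma>0 \<inter> \<Delta>0 = {}" for \<Gamma>0 \<Delta>0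
    using that unfolding atom_def by blast
  have SnotI: "S \<notin> \<I>"
  proof
    assume SI: "S \<in> \<I>"
    then have "atom {S} \<subseteq> S" unfolding atom_def by auto
    then have "atom {S} - S = {}" by auto
    moreover have "atom {S} - S \<approx> L" using key2[of "{S}"] hc[of "{S}"] SI by auto
    ultimately have "({}::'a set) \<approx> L" by metis
    then show False using inf eqpoll_sym by fastforce
  qed
  have SF: "S \<in> full_subsets L"
    using full_sup[OF _ SL hL[of "{}"]] key1[of "{}"] SL unfolding full_subsets_def by auto
  have "comb L (insert S \<I>) \<subseteq> full_subsets L"
  proof
    fix C assume "C \<in> comb L (insert S \<I>)"
    then obtain \<Gamma> \<Delta> where GD: "C = (L \<inter> \<Inter>\<Gamma>) - \<Union>\<Delta>" "\<Gamma> \<subseteq> insert S \<I>" "\<Delta> \<subseteq> insert S \<I>"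
      "finite \<Gamma>" "finite \<Delta>" "\<Gamma> \<inter> \<Delta> = {}" unfolding comb_def by blast
    define \<Gamma>0 where "\<Gamma>0 = \<Gamma> - {S}"
    define \<Delta>0 where "\<Delta>0 = \<Delta> - {S}"
    have G0: "\<Gamma>0 \<subseteq> \<I>" "\<Delta>0 \<subseteq> \<I>" "\<Gamma>0 \<inter> \<Delta>0 = {}" using GD unfolding \<Gamma>0_def \<Delta>0_def by auto
    have sa: "atom \<Gamma>0 \<subseteq> (L \<inter> \<Inter>\<Gamma>0) - \<Union>\<Delta>0" using sub_atom G0 by blast
    have CL: "C \<subseteq> L" using GD by auto
    have "\<exists>X. X \<subseteq> C \<and> X \<approx> L"
    proof (cases "S \<in> \<Gamma>")
      case True
      then have "S \<notin> \<Delta>" using GD by auto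
      then have "C = ((L \<inter> \<Inter>\<Gamma>0) - \<Union>\<Delta>0) \<inter> S" using True GD unfolding \<Gamma>0_def \<Delta>0_def by auto
      then have "h \<Gamma>0 \<subseteq> C" using key1[OF G0(1)] sa by blast
      then show ?thesis using hL[OF G0(1)] by blast
    next
      case False
      show ?thesis
      proof (cases "S \<in> \<Delta>")
        case True
        then have "C = ((L \<inter> \<Inter>\<Gamma>0) - \<Union>\<Delta>0) - S" using False GD unfolding \<Gamma>0_def \<Delta>0_def by auto
        then have "atom \<Gamma>0 - h \<Gamma>0 \<subseteq> C" using key2[OF G0(1)] sa by blast
        then show ?thesis using hc[OF G0(1)] by blast
      next
        case F2: False
        then have "C = (L \<inter> \<Inter>\<Gamma>0) - \<Union>\<Delta>0" using False GD unfolding \<Gamma>0_def \<Delta>0_def by auto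
        then show ?thesis using sa atom_full[OF G0(1)] by blast
      qed
    qed
    then show "C \<in> full_subsets L" using full_sup CL unfolding full_subsets_def by blast
  qed
  moreover have "insert S \<I> \<subseteq> full_subsets L" using SF ind unfolding independent_def by auto
  ultimately show ?thesis using SnotI unfolding independent_def by blast
qed

theorem claim2p7:
  fixes L :: "'a set"
  assumes "uncountable L"
    and "cf_omega L"
    and "maximal_independent L \<I>"
  shows "\<exists>\<R>. unsplittable L \<R> \<and> \<R> \<lesssim> \<I>"
proof -
  have inf: "infinite L" using assms(1) countable_finite by blast
  have ind: "independent L \<I>" using assms(3) by (simp add: maximal_independent_def)
  have "infinite \<I>"
  proof
    assume "finite \<I>"
    then obtain S where "S \<notin> \<I>" "independent L (insert S \<I>)"
      using finite_ind_not_max[OF inf ind] by blast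
    then show False using assms(3) unfolding maximal_independent_def by blast
  qed
  then show ?thesis using comb_lepoll comb_unsplittable[OF inf assms(3)] by blast
qed

end
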